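(* Let $\alpha\in(0,1)$. For distinct points $x_1,x_2,x_3,x_4\in\mathbf{R}^2$ write $d_{i,j}=\|x_j-x_i\|$ and $$\rho(x_1,x_2;x_3,x_4)=\frac{(d_{1,4}^{\alpha}-d_{1,3}^{\alpha})-(d_{2,4}^{\alpha}-d_{2,3}^{\alpha})}{2(d_{1,2}d_{3,4})^{\alpha/2}} ,$$ and extend the same formula to the case where $\{x_1,x_2\}$ and $\{x_3,x_4\}$ share exactly one point. Let $P_1$ be a homogeneous Poisson point process of intensity $1$ in $\mathbf{R}^2$, $\preceq$ the lexicographic order, and for distinct points define $$p_{2,1}(x_1,x_2,x_3,x_4)=\mathbb{P}\big[x_1\sim x_2,\ x_3\sim x_4 \text{ in } \mathrm{Del}(P_1\cup\{x_1,x_2,x_3,x_4\}),\ x_1\preceq x_2,\ x_3\preceq x_4\big],$$ $$q^{(3\leftrightarrow1)}_{2,1}(x_1,x_2,x_4)=\mathbb{P}[x_1\sim x_2,\ x_1\sim x_4\text{ in }\mathrm{Del}(P_1\cup\{x_1,x_2,x_4\}),\ x_1\preceq x_2,\ x_1\preceq x_4],$$ $$q^{(3\leftrightarrow2)}_{2,1}(x_1,x_2,x_4)=\mathbb{P}[x_1\sim x_2,\ x_2\sim x_4\text{ in }\mathrm{Del}(P_1\cup\{x_1,x_2,x_4\}),\ x_1\preceq x_2\preceq x_4],$$ $$q^{(4\leftrightarrow1)}_{2,1}(x_1,x_2,x_3)=\mathbb{P}[x_1\sim x_2,\ x_1\sim x_3\text{ in }\mathrm{Del}(P_1\cup\{x_1,x_2,x_3\}),\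 x_3\preceq x_1\preceq x_2],$$ $$q^{(4\leftrightarrow2)}_{2,1}(x_1,x_2,x_3)=\mathbb{P}[x_1\sim x_2,\ x_2\sim x_3\text{ in }\mathrm{Del}(P_1\cup\{x_1,x_2,x_3\}),\ x_1\preceq x_2,\ x_3\preceq x_2].$$ Set $$\sigma^2_{0,V_2}=\int_{(\mathbf{R}^2)^3}\rho(0,x_2;x_3,x_4)^2\,p_{2,1}(0,x_2,x_3,x_4)\,dx_2\,dx_3\,dx_4,$$ $$\sigma^2_{1,(3\leftrightarrow1),V_2}=\int_{(\mathbf{R}^2)^2}\rho(0,x_2;0,x_4)^2q^{(3\leftrightarrow1)}_{2,1}(0,x_2,x_4)\,dx_2dx_4,\quad \sigma^2_{1,(3\leftrightarrow2),V_2}=\int_{(\mathbf{R}^2)^2}\rho(0,x_2;x_2,x_4)^2q^{(3\leftrightarrow2)}_{2,1}(0,x_2,x_4)\,dx_2dx_4,$$ $$\sigma^2_{1,(4\leftrightarrow1),V_2}=\int_{(\mathbf{R}^2)^2}\rho(0,x_2;x_3,0)^2q^{(4\leftrightarrow1)}_{2,1}(0,x_2,x_3)\,dx_2dx_3,\quad \sigma^2_{1,(4\leftrightarrow2),V_2}=\int_{(\mathbf{R}^2)^2}\rho(0,x_2;x_3,x_2)^2q^{(4\leftrightarrow2)}_{2,1}(0,x_2,x_3)\,dx_2dx_3,$$ and $$\sigma^2_{V_2}=\frac23\Big(\sigma^2_{0,V_2}+\sigma^2_{1,(3\leftrightarrow1),V_2}+\sigma^2_{1,(3\leftrightarrow2),V_2}+\sigma^2_{1,(4\leftrightarrow1),V_2}+\sigma^2_{1,(4\leftrightarrow2),V_2}\Big)+2.$$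 Then $\sigma^2_{V_2}$ is finite.
   Context: $x\sim y$ in $\mathrm{Del}(P)$ means that $x,y$ are joined by an edge of the Delaunay triangulation of the point set $P$ (the unique triangulation with vertices in $P$ whose triangles have circumdisks containing no point of $P$ in their interior). The quantity $\rho(x_1,x_2;x_3,x_4)$ is the correlation between the normalized increments $W(x_2)-W(x_1)$ and $W(x_4)-W(x_3)$ of an isotropic fractional Brownian field with Hurst parameter $H=\alpha/2$ (covariance $\frac{\sigma^2}{2}(\|x\|^{\alpha}+\|y\|^{\alpha}-\|y-x\|^{\alpha})$). *)

theory Defs
  imports "HOL-Probability.Probability"
begin

type_synonym pt = "real^2"

definition lex_le :: "pt \<Rightarrow> pt \<Rightarrow> bool" where
  "lex_le x y \<longleftrightarrow> x$1 < y$1 \<or> (x$1 = y$1 \<and> x$2 \<le> y$2)"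

text \<open>Delaunay edge: x, y are two vertices of a triangle xyz with vertices in P whose
  open circumdisk contains no point of P (existence of an equidistant centre forces
  x, y, z to be non-collinear).\<close>
definition del_edge :: "pt set \<Rightarrow> pt \<Rightarrow> pt \<Rightarrow> bool" where
  "del_edge P x y \<longleftrightarrow> x \<in> P \<and> y \<in> P \<and> x \<noteq> y \<and>
     (\<exists>z\<in>P. z \<noteq> x \<and> z \<noteq> y \<and>
        (\<exists>c. dist c x = dist c y \<and> dist c x = dist c z \<and> P \<inter> ball c (dist c x) = {}))"

definition poisson_pp :: "'w measure \<Rightarrow> ('w \<Rightarrow> pt set) \<Rightarrow> bool" where
  "poisson_pp M Phi \<longleftrightarrow> prob_space M \<and>
     (\<forall>w\<in>space M. \<forall>B. bounded B \<longrightarrow> finite (Phi w \<inter> B)) \<and>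
     (\<forall>B. B \<in> sets lborel \<and> bounded B \<longrightarrow>
        (\<lambda>w. card (Phi w \<inter> B)) \<in> measurable M (count_space UNIV) \<and>
        (\<forall>k. measure M {w\<in>space M. card (Phi w \<inter> B) = k}
              = exp (- measure lborel B) * measure lborel B ^ k / fact k)) \<and>
     (\<forall>(I::nat set) Bs. finite I \<longrightarrow> (\<forall>i\<in>I. Bs i \<in> sets lborel \<and> bounded (Bs i)) \<longrightarrow>
        disjoint_family_on Bs I \<longrightarrow>
        prob_space.indep_vars M (\<lambda>_. count_space UNIV) (\<lambda>i w. card (Phi w \<inter> Bs i)) I)"

definition rho :: "real \<Rightarrow> pt \<Rightarrow> pt \<Rightarrow> pt \<Rightarrow> pt \<Rightarrow> real" where
  "rho \<alpha> x1 x2 x3 x4 =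
     ((dist x1 x4 powr \<alpha> - dist x1 x3 powr \<alpha>) - (dist x2 x4 powr \<alpha> - dist x2 x3 powr \<alpha>))
     / (2 * (dist x1 x2 * dist x3 x4) powr (\<alpha> / 2))"

definition p21 :: "'w measure \<Rightarrow> ('w \<Rightarrow> pt set) \<Rightarrow> pt \<Rightarrow> pt \<Rightarrow> pt \<Rightarrow> pt \<Rightarrow> real" where
  "p21 M Phi x1 x2 x3 x4 = measure M {w\<in>space M.
     del_edge (Phi w \<union> {x1,x2,x3,x4}) x1 x2 \<and> del_edge (Phi w \<union> {x1,x2,x3,x4}) x3 x4 \<and>
     lex_le x1 x2 \<and> lex_le x3 x4}"

definition q31 :: "'w measure \<Rightarrow> ('w \<Rightarrow> pt set) \<Rightarrow> pt \<Rightarrow> pt \<Rightarrow> pt \<Rightarrow> real" where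
  "q31 M Phi x1 x2 x4 = measure M {w\<in>space M.
     del_edge (Phi w \<union> {x1,x2,x4}) x1 x2 \<and> del_edge (Phi w \<union> {x1,x2,x4}) x1 x4 \<and>
     lex_le x1 x2 \<and> lex_le x1 x4}"

definition q32 :: "'w measure \<Rightarrow> ('w \<Rightarrow> pt set) \<Rightarrow> pt \<Rightarrow> pt \<Rightarrow> pt \<Rightarrow> real" where
  "q32 M Phi x1 x2 x4 = measure M {w\<in>space M.
     del_edge (Phi w \<union> {x1,x2,x4}) x1 x2 \<and> del_edge (Phi w \<union> {x1,x2,x4}) x2 x4 \<and>
     lex_le x1 x2 \<and> lex_le x2 x4}"

definition q41 :: "'w measure \<Rightarrow> ('w \<Rightarrow> pt set) \<Rightarrow> pt \<Rightarrow> pt \<Rightarrow> pt \<Rightarrow> real" where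
  "q41 M Phi x1 x2 x3 = measure M {w\<in>space M.
     del_edge (Phi w \<union> {x1,x2,x3}) x1 x2 \<and> del_edge (Phi w \<union> {x1,x2,x3}) x1 x3 \<and>
     lex_le x3 x1 \<and> lex_le x1 x2}"

definition q42 :: "'w measure \<Rightarrow> ('w \<Rightarrow> pt set) \<Rightarrow> pt \<Rightarrow> pt \<Rightarrow> pt \<Rightarrow> real" where
  "q42 M Phi x1 x2 x3 = measure M {w\<in>space M.
     del_edge (Phi w \<union> {x1,x2,x3}) x1 x2 \<and> del_edge (Phi w \<union> {x1,x2,x3}) x2 x3 \<and>
     lex_le x1 x2 \<and> lex_le x3 x2}"

definition sigma0 :: "real \<Rightarrow> 'w measure \<Rightarrow> ('w \<Rightarrow> pt set) \<Rightarrow> ennreal" where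
  "sigma0 \<alpha> M Phi = (\<integral>\<^sup>+ x2. \<integral>\<^sup>+ x3. \<integral>\<^sup>+ x4.
     (if distinct [0, x2, x3, x4]
      then ennreal ((rho \<alpha> 0 x2 x3 x4)\<^sup>2 * p21 M Phi 0 x2 x3 x4) else 0) \<partial>lborel \<partial>lborel \<partial>lborel)"

definition sigma1_31 :: "real \<Rightarrow> 'w measure \<Rightarrow> ('w \<Rightarrow> pt set) \<Rightarrow> ennreal" where
  "sigma1_31 \<alpha> M Phi = (\<integral>\<^sup>+ x2. \<integral>\<^sup>+ x4.
     (if distinct [0, x2, x4]
      then ennreal ((rho \<alpha> 0 x2 0 x4)\<^sup>2 * q31 M Phi 0 x2 x4) else 0) \<partial>lborel \<partial>lborel)"

definition sigma1_32 :: "real \<Rightarrow> 'w measure \<Rightarrow> ('w \<Rightarrow> pt set) \<Rightarrow> ennreal" where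
  "sigma1_32 \<alpha> M Phi = (\<integral>\<^sup>+ x2. \<integral>\<^sup>+ x4.
     (if distinct [0, x2, x4]
      then ennreal ((rho \<alpha> 0 x2 x2 x4)\<^sup>2 * q32 M Phi 0 x2 x4) else 0) \<partial>lborel \<partial>lborel)"

definition sigma1_41 :: "real \<Rightarrow> 'w measure \<Rightarrow> ('w \<Rightarrow> pt set) \<Rightarrow> ennreal" where
  "sigma1_41 \<alpha> M Phi = (\<integral>\<^sup>+ x2. \<integral>\<^sup>+ x3.
     (if distinct [0, x2, x3]
      then ennreal ((rho \<alpha> 0 x2 x3 0)\<^sup>2 * q41 M Phi 0 x2 x3) else 0) \<partial>lborel \<partial>lborel)"

definition sigma1_42 :: "real \<Rightarrow> 'w measure \<Rightarrow> ('w \<Rightarrow> pt set) \<Rightarrow> ennreal" where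
  "sigma1_42 \<alpha> M Phi = (\<integral>\<^sup>+ x2. \<integral>\<^sup>+ x3.
     (if distinct [0, x2, x3]
      then ennreal ((rho \<alpha> 0 x2 x3 x2)\<^sup>2 * q42 M Phi 0 x2 x3) else 0) \<partial>lborel \<partial>lborel)"

definition sigmaV2 :: "real \<Rightarrow> 'w measure \<Rightarrow> ('w \<Rightarrow> pt set) \<Rightarrow> ennreal" where
  "sigmaV2 \<alpha> M Phi = 2/3 * (sigma0 \<alpha> M Phi + sigma1_31 \<alpha> M Phi + sigma1_32 \<alpha> M Phi
      + sigma1_41 \<alpha> M Phi + sigma1_42 \<alpha> M Phi) + 2"

end

theory Submission
  imports Defs
begin
lemma DIM2: "DIM(real^2) = 2" by simp

lemma radial_bound:
  fixes g :: "real \<Rightarrow> real" and c :: "real^2"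
  assumes nn: "\<And>t. 0 \<le> t \<Longrightarrow> 0 \<le> g t"
    and anti: "\<And>s t. 0 \<le> s \<Longrightarrow> s \<le> t \<Longrightarrow> g t \<le> g s"
    and summ: "summable (\<lambda>n. g (real n) * (2*real n + 1))"
  shows "(\<integral>\<^sup>+x. ennreal (g (norm (x - c))) \<partial>lborel)
     \<le> ennreal (unit_ball_vol 2 * (\<Sum>n. g (real n) * (2*real n+1)))"
proof -
  define U where "U = unit_ball_vol 2"
  have U0: "U > 0" unfolding U_def by simp
  define A where "A n = ball c (real n + 1) - ball c (real n)" for n :: nat
  have Asets: "A n \<in> sets lborel" for n unfolding A_def by auto
  have pw: "ennreal (g (norm (x - c))) \<le> (\<Sum>n. ennreal (g (real n)) * indicator (A n) x)" for x
  proof -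
    define k where "k = nat (floor (norm (x - c)))"
    have kk: "real k = of_int (floor (norm (x - c)))" unfolding k_def by simp
    have k1: "real k \<le> norm (x - c)" unfolding kk by linarith
    have k2: "norm (x - c) < real k + 1" unfolding kk by linarith
    have xA: "x \<in> A k" unfolding A_def using k1 k2 by (auto simp: dist_norm norm_minus_commute)
    have "ennreal (g (norm (x - c))) \<le> ennreal (g (real k))"
      using anti[OF _ k1] by (auto intro: ennreal_leI)
    also have "\<dots> = (\<Sum>n\<in>{k}. ennreal (g (real n)) * indicator (A n) x)" using xA by simp
    also have "\<dots> \<le> (\<Sum>n. ennreal (g (real n)) * indicator (A n) x)"
      by (rule sum_le_suminf) (auto intro: summableI)
    finally show ?thesis .
  qed
  have "(\<integral>\<^sup>+x. ennreal (g (norm (x - c))) \<partial>lborel)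
      \<le> (\<integral>\<^sup>+x. (\<Sum>n. ennreal (g (real n)) * indicator (A n) x) \<partial>lborel)"
    by (rule nn_integral_mono) (use pw in auto)
  also have "\<dots> = (\<Sum>n. \<integral>\<^sup>+x. ennreal (g (real n)) * indicator (A n) x \<partial>lborel)"
    by (rule nn_integral_suminf) (use Asets in auto)
  also have "\<dots> = (\<Sum>n. ennreal (g (real n)) * emeasure lborel (A n))"
    using Asets by (simp add: nn_integral_cmult_indicator)
  also have "\<dots> = (\<Sum>n. ennreal (U * (g (real n) * (2*real n+1))))"
  proof (rule suminf_cong)
    fix n
    have "emeasure lborel (A n) = emeasure lborel (ball c (real n + 1)) - emeasure lborel (ball c (real n))"
      unfolding A_def by (rule emeasure_Diff) (auto simp: emeasure_ball)
    also have "\<dots> = ennreal (U * (real n + 1)^2) - ennreal (U * (real n)^2)"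
      by (simp add: emeasure_ball U_def)
    also have "\<dots> = ennreal (U * (2*real n + 1))"
      using U0 by (subst ennreal_minus) (auto simp: algebra_simps power2_eq_square)
    finally show "ennreal (g (real n)) * emeasure lborel (A n) = ennreal (U * (g (real n) * (2*real n+1)))"
      using U0 nn[of "real n"] by (simp add: ennreal_mult[symmetric] algebra_simps)
  qed
  also have "\<dots> = ennreal (\<Sum>n. U * (g (real n) * (2*real n+1)))"
    using U0 nn by (intro suminf_ennreal2 summable_mult summ) auto
  also have "\<dots> = ennreal (U * (\<Sum>n. g (real n) * (2*real n+1)))"
    using summ by (simp add: suminf_mult)
  finally show ?thesis unfolding U_def .
qed

definition perp :: "real^2 \<Rightarrow> real^2" where
  "perp d = vector [-(d$2), d$1]"

lemma inner2: "(x::real^2) \<bullet> y = x$1*y$1 + x$2*y$2"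
  by (simp add: inner_vec_def sum_2)

lemma perp_norm: "norm (perp d) = norm d"
  unfolding norm_eq_sqrt_inner inner2 perp_def by (simp add: algebra_simps)

lemma perp_inner:
  assumes "w \<bullet> d = 0"
  shows "\<bar>w \<bullet> perp d\<bar> = norm w * norm (perp d)"
proof -
  have e: "w$1*d$1 + w$2*d$2 = 0" using assms by (simp add: inner2)
  have "(w \<bullet> perp d)^2 = (w \<bullet> w) * (d \<bullet> d) - (w$1*d$1 + w$2*d$2)^2"
    unfolding inner2 perp_def by (simp add: algebra_simps power2_eq_square)
  also have "\<dots> = (norm w * norm (perp d))^2"
    using e by (simp add: perp_norm power_mult_distrib dot_square_norm)
  finally have "(w \<bullet> perp d)^2 = (norm w * norm (perp d))^2" .
  then have "sqrt ((w \<bullet> perp d)^2) = sqrt ((norm w * norm (perp d))^2)" by simp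
  then show ?thesis by simp
qed

lemma ball_sub_aux:
  fixes w n m :: "real^2"
  assumes s: "w \<bullet> n = norm w * norm n" and R: "R = sqrt (norm w ^2 + norm n ^2 / 4)"
  shows "ball (m + (1/4) *\<^sub>R n) (norm n / 4) \<subseteq> ball (m + w) R"
proof
  fix p assume p: "p \<in> ball (m + (1/4) *\<^sub>R n) (norm n / 4)"
  define W where "W = norm w"
  define N where "N = norm n"
  have W0: "W \<ge> 0" "N \<ge> 0" unfolding W_def N_def by auto
  have "(norm ((1/4) *\<^sub>R n - w))^2 = ((1/4) *\<^sub>R n - w) \<bullet> ((1/4) *\<^sub>R n - w)"
    by (simp add: power2_norm_eq_inner)
  also have "\<dots> = (1/16)*(n \<bullet> n) - (1/2)*(w \<bullet> n) + w \<bullet> w"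
    by (simp add: inner_diff_left inner_diff_right inner_commute algebra_simps)
  also have "\<dots> = N^2/16 - (w \<bullet> n)/2 + W^2"
    by (simp add: W_def N_def power2_norm_eq_inner)
  also have "\<dots> = (W - N/4)^2" using s unfolding W_def N_def by (simp add: power2_eq_square algebra_simps)
  finally have h: "norm ((1/4) *\<^sub>R n - w) = \<bar>W - N/4\<bar>"
    by (metis norm_ge_zero real_sqrt_abs real_sqrt_unique)
  have "dist (m + w) p \<le> dist (m + w) (m + (1/4) *\<^sub>R n) + dist (m + (1/4) *\<^sub>R n) p"
    by (rule dist_triangle)
  also have "dist (m + w) (m + (1/4) *\<^sub>R n) = \<bar>W - N/4\<bar>"
    using h by (simp add: dist_norm norm_minus_commute)
  also have "dist (m + (1/4) *\<^sub>R n) p < N/4" using p unfolding N_def by simp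
  finally have lt: "dist (m + w) p < \<bar>W - N/4\<bar> + N/4" by simp
  have "\<bar>W - N/4\<bar> + N/4 \<le> R"
  proof (cases "W \<ge> N/4")
    case True
    then have "\<bar>W - N/4\<bar> + N/4 = W" by simp
    also have "W \<le> R" unfolding R W_def
      by (rule real_le_rsqrt) (simp add: W_def N_def)
    finally show ?thesis .
  next
    case False
    then have "\<bar>W - N/4\<bar> + N/4 = N/2 - W" by simp
    also have "N/2 - W \<le> R" unfolding R W_def[symmetric] N_def[symmetric]
      using W0 False by (intro real_le_rsqrt) (auto simp: power2_eq_square algebra_simps)
    finally show ?thesis .
  qed
  with lt show "p \<in> ball (m + w) R" by simp
qed

lemma del_edge_empty:
  assumes "del_edge P x y"
  shows "P \<inter> ball ((1/2) *\<^sub>R (x + y) + (1/4) *\<^sub>R perp (y - x)) (norm (y - x) / 4) = {} \<or>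
         P \<inter> ball ((1/2) *\<^sub>R (x + y) + (1/4) *\<^sub>R (- perp (y - x))) (norm (y - x) / 4) = {}"
proof -
  define m where "m = (1/2) *\<^sub>R (x + y)"
  define n where "n = perp (y - x)"
  define d where "d = y - x"
  obtain c where dc: "dist c x = dist c y" and emp: "P \<inter> ball c (dist c x) = {}"
    using assms unfolding del_edge_def by blast
  define w where "w = c - m"
  have cx: "c - x = w + (1/2) *\<^sub>R d" unfolding w_def m_def d_def by (simp add: vec_eq_iff algebra_simps)
  have cy: "c - y = w - (1/2) *\<^sub>R d" unfolding w_def m_def d_def by (simp add: vec_eq_iff algebra_simps)
  have "(norm (c - x))^2 = (norm (c - y))^2" using dc by (simp add: dist_norm)
  then have "(w + (1/2) *\<^sub>R d) \<bullet> (w + (1/2) *\<^sub>R d) = (w - (1/2) *\<^sub>R d) \<bullet> (w - (1/2) *\<^sub>R d)"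
    unfolding cx cy by (simp add: power2_norm_eq_inner)
  then have wd: "w \<bullet> d = 0"
    by (simp add: inner_add_left inner_add_right inner_diff_left inner_diff_right inner_commute)
  have "(dist c x)^2 = (w + (1/2) *\<^sub>R d) \<bullet> (w + (1/2) *\<^sub>R d)"
    by (simp add: dist_norm cx power2_norm_eq_inner)
  also have "\<dots> = (norm w)^2 + (norm n)^2/4"
    using wd unfolding n_def perp_norm d_def[symmetric]
    by (simp add: inner_add_left inner_add_right inner_commute power2_norm_eq_inner)
  finally have R: "dist c x = sqrt ((norm w)^2 + (norm n)^2/4)"
    by (metis zero_le_dist real_sqrt_unique)
  have nn: "norm n = norm (y - x)" unfolding n_def by (simp add: perp_norm)
  have ab: "\<bar>w \<bullet> n\<bar> = norm w * norm n" unfolding n_def d_def[symmetric] by (rule perp_inner[OF wd])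
  have cm: "m + w = c" unfolding w_def by simp
  show ?thesis
  proof (cases "w \<bullet> n \<ge> 0")
    case True
    then have "w \<bullet> n = norm w * norm n" using ab by simp
    from ball_sub_aux[OF this R, of m]
    have "ball (m + (1/4) *\<^sub>R n) (norm (y - x) / 4) \<subseteq> ball c (dist c x)" by (simp add: cm nn)
    then show ?thesis using emp unfolding m_def n_def by blast
  next
    case False
    then have "w \<bullet> (-n) = norm w * norm (-n)" using ab by simp
    from ball_sub_aux[OF this, of "dist c x" m] R
    have "ball (m + (1/4) *\<^sub>R (-n)) (norm (y - x) / 4) \<subseteq> ball c (dist c x)" by (simp add: cm nn)
    then show ?thesis using emp unfolding m_def n_def by blast
  qed
qed

lemma measure_ball2: "measure lborel (ball (c::real^2) r) = unit_ball_vol 2 * r^2" if "r \<ge> 0"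
  using that by (simp add: measure_def emeasure_ball)

lemma void_prob:
  assumes pp: "poisson_pp M Phi" and True: "r \<ge> 0"
  shows "{w\<in>space M. Phi w \<inter> ball c r = {}} \<in> sets M \<and>
         measure M {w\<in>space M. Phi w \<inter> ball c r = {}} = exp (- unit_ball_vol 2 * r^2)"
proof -
  have fin: "\<And>w. w \<in> space M \<Longrightarrow> finite (Phi w \<inter> ball c r)"
    using pp unfolding poisson_pp_def by auto
  have B: "ball c r \<in> sets lborel \<and> bounded (ball c r)" by auto
  have meas: "(\<lambda>w. card (Phi w \<inter> ball c r)) \<in> measurable M (count_space UNIV)"
    and pr: "measure M {w\<in>space M. card (Phi w \<inter> ball c r) = 0} = exp (- measure lborel (ball c r))"
    using pp B unfolding poisson_pp_def by (auto dest!: spec[of _ "ball c r"] dest: spec[of _ 0])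
  have eq: "{w\<in>space M. Phi w \<inter> ball c r = {}} = {w\<in>space M. card (Phi w \<inter> ball c r) = 0}"
    using fin by (intro Collect_cong conj_cong refl) (simp add: card_eq_0_iff)
  have "{w\<in>space M. card (Phi w \<inter> ball c r) = 0} = (\<lambda>w. card (Phi w \<inter> ball c r)) -` {0} \<inter> space M"
    by auto
  also have "\<dots> \<in> sets M" by (rule measurable_sets[OF meas]) auto
  finally show ?thesis using pr True by (simp add: eq measure_ball2)
qed

lemma edge_prob:
  assumes pp: "poisson_pp M Phi" and sub: "A \<subseteq> {w\<in>space M. del_edge (Phi w \<union> S) x y}"
  shows "measure M A \<le> 2 * exp (- unit_ball_vol 2 * (norm (y - x)/4)^2)"
proof -
  interpret prob_space M using pp unfolding poisson_pp_def by auto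
  define c1 where "c1 = (1/2) *\<^sub>R (x + y) + (1/4) *\<^sub>R perp (y - x)"
  define c2 where "c2 = (1/2) *\<^sub>R (x + y) + (1/4) *\<^sub>R (- perp (y - x))"
  define r where "r = norm (y - x) / 4"
  have r0: "r \<ge> 0" unfolding r_def by simp
  define U1 where "U1 = {w\<in>space M. Phi w \<inter> ball c1 r = {}}"
  define U2 where "U2 = {w\<in>space M. Phi w \<inter> ball c2 r = {}}"
  have U1: "U1 \<in> sets M" "measure M U1 = exp (- unit_ball_vol 2 * r^2)"
    using void_prob[OF pp r0, of c1] unfolding U1_def by auto
  have U2: "U2 \<in> sets M" "measure M U2 = exp (- unit_ball_vol 2 * r^2)"
    using void_prob[OF pp r0, of c2] unfolding U2_def by auto
  have "A \<subseteq> U1 \<union> U2"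
  proof
    fix w assume "w \<in> A"
    then have w: "w \<in> space M" "del_edge (Phi w \<union> S) x y" using sub by auto
    from del_edge_empty[OF w(2)] show "w \<in> U1 \<union> U2"
      unfolding U1_def U2_def c1_def c2_def r_def using w(1) by blast
  qed
  then have "measure M A \<le> measure M (U1 \<union> U2)"
    using U1 U2 by (intro finite_measure_mono) auto
  also have "\<dots> \<le> measure M U1 + measure M U2"
    using U1 U2 by (intro measure_Un_le) auto
  finally show ?thesis using U1 U2 unfolding r_def by simp
qed

lemma powr_subadd:
  fixes s t \<alpha> :: real
  assumes "0 \<le> s" "0 \<le> t" "0 < \<alpha>" "\<alpha> \<le> 1"
  shows "(s + t) powr \<alpha> \<le> s powr \<alpha> + t powr \<alpha>"
proof (cases "s + t = 0")
  case True then show ?thesis using assms by simp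
next
  case False
  then have st: "s + t > 0" using assms by simp
  define l where "l = s / (s + t)"
  have l01: "0 \<le> l" "l \<le> 1" "0 \<le> 1 - l" "1 - l \<le> 1" using assms st unfolding l_def by (auto simp: field_simps)
  have s: "s = (s + t) * l" and t: "t = (s + t) * (1 - l)" using st unfolding l_def by (auto simp: field_simps)
  have a: "l \<le> l powr \<alpha>" using powr_mono'[of \<alpha> 1 l] l01 assms by simp
  have b: "1 - l \<le> (1 - l) powr \<alpha>" using powr_mono'[of \<alpha> 1 "1 - l"] l01 assms by simp
  have e1: "(s + t) powr \<alpha> * l powr \<alpha> = s powr \<alpha>"
    using l01 st by (simp add: powr_mult[symmetric] s[symmetric])
  have e2: "(s + t) powr \<alpha> * (1 - l) powr \<alpha> = t powr \<alpha>"
    using l01 st by (simp add: powr_mult[symmetric] t[symmetric])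
  have "s powr \<alpha> + t powr \<alpha> = (s + t) powr \<alpha> * (l powr \<alpha> + (1 - l) powr \<alpha>)"
    using e1 e2 by (simp add: algebra_simps)
  also have "\<dots> \<ge> (s + t) powr \<alpha> * (l + (1 - l))"
    using a b by (intro mult_left_mono) auto
  finally show ?thesis by simp
qed

lemma dist_powr_diff:
  fixes a b c :: "real^2"
  assumes "0 < \<alpha>" "\<alpha> \<le> 1"
  shows "\<bar>dist a b powr \<alpha> - dist a c powr \<alpha>\<bar> \<le> dist b c powr \<alpha>"
proof -
  have 1: "dist a b powr \<alpha> \<le> dist a c powr \<alpha> + dist b c powr \<alpha>"
  proof -
    have "dist a b powr \<alpha> \<le> (dist a c + dist c b) powr \<alpha>"
      using assms by (intro powr_mono2) (auto intro: dist_triangle)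
    also have "\<dots> \<le> dist a c powr \<alpha> + dist c b powr \<alpha>" using assms by (intro powr_subadd) auto
    finally show ?thesis by (simp add: dist_commute)
  qed
  have 2: "dist a c powr \<alpha> \<le> dist a b powr \<alpha> + dist b c powr \<alpha>"
  proof -
    have "dist a c powr \<alpha> \<le> (dist a b + dist b c) powr \<alpha>"
      using assms by (intro powr_mono2) (auto intro: dist_triangle)
    also have "\<dots> \<le> dist a b powr \<alpha> + dist b c powr \<alpha>" using assms by (intro powr_subadd) auto
    finally show ?thesis .
  qed
  from 1 2 show ?thesis by linarith
qed

lemma rho_sq_le1:
  assumes "0 < \<alpha>" "\<alpha> \<le> 1"
  shows "(rho \<alpha> x1 x2 x3 x4)^2 \<le> 1"
proof -
  define N where "N = (dist x1 x4 powr \<alpha> - dist x1 x3 powr \<alpha>) - (dist x2 x4 powr \<alpha> - dist x2 x3 powr \<alpha>)"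
  define A where "A = dist x1 x2 powr \<alpha>"
  define B where "B = dist x3 x4 powr \<alpha>"
  have A0: "A \<ge> 0" and B0: "B \<ge> 0" unfolding A_def B_def by auto
  have NB: "\<bar>N\<bar> \<le> 2 * B"
  proof -
    have "\<bar>dist x1 x4 powr \<alpha> - dist x1 x3 powr \<alpha>\<bar> \<le> dist x4 x3 powr \<alpha>" by (rule dist_powr_diff[OF assms])
    moreover have "\<bar>dist x2 x4 powr \<alpha> - dist x2 x3 powr \<alpha>\<bar> \<le> dist x4 x3 powr \<alpha>" by (rule dist_powr_diff[OF assms])
    ultimately show ?thesis unfolding N_def B_def by (simp add: dist_commute)
  qed
  have NA: "\<bar>N\<bar> \<le> 2 * A"
  proof -
    have "\<bar>dist x4 x1 powr \<alpha> - dist x4 x2 powr \<alpha>\<bar> \<le> dist x1 x2 powr \<alpha>" by (rule dist_powr_diff[OF assms])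
    moreover have "\<bar>dist x3 x1 powr \<alpha> - dist x3 x2 powr \<alpha>\<bar> \<le> dist x1 x2 powr \<alpha>" by (rule dist_powr_diff[OF assms])
    ultimately show ?thesis unfolding N_def A_def by (simp add: dist_commute)
  qed
  have NN: "N^2 \<le> 4 * (A * B)"
  proof -
    have "N^2 = \<bar>N\<bar> * \<bar>N\<bar>" by (simp add: power2_eq_square)
    also have "\<dots> \<le> (2*A) * (2*B)" using NA NB by (intro mult_mono) auto
    finally show ?thesis by simp
  qed
  show ?thesis
  proof (cases "dist x1 x2 * dist x3 x4 = 0")
    case True
    then have z: "(dist x1 x2 * dist x3 x4) powr (\<alpha>/2) = 0" by simp
    show ?thesis unfolding rho_def z by simp
  next
    case False
    then have p: "dist x1 x2 * dist x3 x4 > 0" by (simp add: less_le)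
    have "((dist x1 x2 * dist x3 x4) powr (\<alpha>/2))^2 = (dist x1 x2 * dist x3 x4) powr (\<alpha>/2 + \<alpha>/2)"
      by (simp only: power2_eq_square powr_add)
    also have "\<dots> = A * B" unfolding A_def B_def by (simp add: powr_mult)
    finally have sq: "((dist x1 x2 * dist x3 x4) powr (\<alpha>/2))^2 = A * B" .
    have "(rho \<alpha> x1 x2 x3 x4)^2 = N^2 / (4 * (A * B))"
      unfolding rho_def N_def[symmetric] by (simp add: power_divide power_mult_distrib sq)
    also have "\<dots> \<le> 1"
    proof -
      have "A * B > 0" using p unfolding A_def B_def by (auto simp: zero_less_mult_iff)
      then show ?thesis using NN by (simp add: divide_le_eq_1)
    qed
    finally show ?thesis .
  qed
qed

lemma exp_poly_bound:
  fixes \<kappa> :: real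
  assumes k: "\<kappa> > 0"
  shows "\<exists>K>0. \<forall>t\<ge>0. 2 * exp (- \<kappa> * t^2) \<le> K / (1 + t)^16"
proof -
  define \<mu> where "\<mu> = min 1 (\<kappa>/8)"
  have mu: "0 < \<mu>" "\<mu> \<le> 1" "\<mu> \<le> \<kappa>/8" unfolding \<mu>_def using k by auto
  define K where "K = 2 * (2/\<mu>)^8"
  have "\<forall>t\<ge>0. 2 * exp (- \<kappa> * t^2) \<le> K / (1 + t)^16"
  proof (intro allI impI)
    fix t :: real assume t: "t \<ge> 0"
    have "(1 + t)^2 \<le> 2 * (1 + t^2)"
    proof -
      have "0 \<le> (t - 1) * (t - 1)" by simp
      then show ?thesis unfolding power2_eq_square by (simp add: algebra_simps)
    qed
    also have "\<dots> \<le> (2/\<mu>) * (1 + \<mu> * t^2)"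
      using mu by (simp add: field_simps)
    also have "\<dots> \<le> (2/\<mu>) * exp (\<mu> * t^2)"
      using mu by (intro mult_left_mono) (auto simp: exp_ge_add_one_self)
    finally have "((1 + t)^2)^8 \<le> ((2/\<mu>) * exp (\<mu> * t^2))^8"
      by (intro power_mono) auto
    also have "\<dots> = (2/\<mu>)^8 * exp (8 * \<mu> * t^2)"
    proof -
      have "exp (\<mu> * t^2) ^ 8 = exp (8 * (\<mu> * t^2))" using exp_of_nat_mult[of 8 "\<mu> * t^2"] by simp
      then show ?thesis by (simp only: power_mult_distrib mult.assoc)
    qed
    also have "\<dots> \<le> (2/\<mu>)^8 * exp (\<kappa> * t^2)"
      using mu by (intro mult_left_mono) (auto intro!: mult_right_mono simp: zero_le_power2)
    finally have h: "(1 + t)^16 \<le> (2/\<mu>)^8 * exp (\<kappa> * t^2)" by (simp add: power_mult[symmetric])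
    have "2 * exp (- \<kappa> * t^2) * (1 + t)^16 \<le> 2 * exp (- \<kappa> * t^2) * ((2/\<mu>)^8 * exp (\<kappa> * t^2))"
      using h by (intro mult_left_mono) auto
    also have "\<dots> = K" unfolding K_def by (simp add: exp_minus field_simps)
    finally show "2 * exp (- \<kappa> * t^2) \<le> K / (1 + t)^16"
      using t by (simp add: field_simps)
  qed
  moreover have "K > 0" unfolding K_def using mu by simp
  ultimately show ?thesis by blast
qed

lemma norm_powr_inner: "norm (z::real^2) powr e = (z \<bullet> z) powr (e/2)"
proof (cases "z = 0")
  case True then show ?thesis by simp
next
  case False
  have "norm z = (z \<bullet> z) powr (1/2)" by (simp add: norm_eq_sqrt_inner powr_half_sqrt)
  then show ?thesis by (simp add: powr_powr)
qed

lemma deriv_normpowr: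
  fixes p v :: "real^2"
  assumes nz: "p + t *\<^sub>R v \<noteq> 0"
  shows "((\<lambda>t. norm (p + t *\<^sub>R v) powr e) has_real_derivative
           (e * norm (p + t *\<^sub>R v) powr (e - 2) * ((p + t *\<^sub>R v) \<bullet> v))) (at t)"
proof -
  define q where "q t = p \<bullet> p + 2 * t * (p \<bullet> v) + t^2 * (v \<bullet> v)" for t
  have qe: "q t = (p + t *\<^sub>R v) \<bullet> (p + t *\<^sub>R v)" for t
    unfolding q_def by (simp add: inner_add_left inner_add_right inner_commute power2_eq_square algebra_simps)
  have fe: "(\<lambda>t. norm (p + t *\<^sub>R v) powr e) = (\<lambda>t. q t powr (e/2))"
    by (simp add: qe norm_powr_inner)
  have dq: "(q has_real_derivative (2 * ((p + t *\<^sub>R v) \<bullet> v))) (at t)"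
    unfolding q_def
    by (auto intro!: derivative_eq_intros simp: inner_add_left algebra_simps power2_eq_square)
  have qpos: "q t > 0" using nz by (simp add: qe)
  define X where "X = (p + t *\<^sub>R v) \<bullet> v"
  have D: "((\<lambda>t. q t powr (e/2)) has_real_derivative (e/2) * q t powr (e/2 - 1) * (2 * X)) (at t)"
    using DERIV_fun_powr[OF dq qpos, of "e/2"] unfolding X_def by simp
  have pw: "q t powr (e/2 - 1) = norm (p + t *\<^sub>R v) powr (e - 2)"
    by (simp only: qe norm_powr_inner diff_divide_distrib) simp
  have eq: "(e/2) * q t powr (e/2 - 1) * (2 * X) = e * norm (p + t *\<^sub>R v) powr (e - 2) * X"
    unfolding pw by simp
  have D2: "((\<lambda>t. q t powr (e/2)) has_real_derivative e * norm (p + t *\<^sub>R v) powr (e - 2) * X) (at t)"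
    using D by (simp only: eq)
  show ?thesis using D2 unfolding fe X_def .
qed

lemma num_decay:
  fixes x2 x3 x4 :: "real^2"
  assumes a0: "0 < \<alpha>" and a1: "\<alpha> < 1"
    and far: "2 * (norm x2 + norm (x4 - x3)) \<le> norm x3" and rpos: "norm x3 > 0"
  shows "\<bar>(dist 0 x4 powr \<alpha> - dist 0 x3 powr \<alpha>) - (dist x2 x4 powr \<alpha> - dist x2 x3 powr \<alpha>)\<bar>
         \<le> 12 * norm x2 * norm (x4 - x3) * norm x3 powr (\<alpha> - 2)"
proof -
  define u where "u = x2"
  define v where "v = x4 - x3"
  define a where "a = norm u"
  define b where "b = norm v"
  define r where "r = norm x3"
  have ab0: "a \<ge> 0" "b \<ge> 0" unfolding a_def b_def by auto
  have far': "2 * (a + b) \<le> r" "r > 0" using far rpos unfolding a_def b_def r_def u_def v_def by auto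
  have lowz: "norm (x3 + t *\<^sub>R v + s *\<^sub>R (- u)) \<ge> r / 2"
    if "0 \<le> s" "s \<le> 1" "0 \<le> t" "t \<le> 1" for s t
  proof -
    define y where "y = t *\<^sub>R v + s *\<^sub>R (- u)"
    have "norm y \<le> norm (t *\<^sub>R v) + norm (s *\<^sub>R (- u))"
      unfolding y_def by (rule norm_triangle_ineq)
    also have "\<dots> = t * b + s * a" using that by (simp add: a_def b_def)
    also have "\<dots> \<le> b + a" using that ab0 by (intro add_mono) (auto intro: mult_left_le_one_le)
    finally have n1: "norm y \<le> a + b" by simp
    have n2: "r \<le> norm (x3 + y) + norm y"
      unfolding r_def using norm_triangle_ineq[of "x3 + y" "- y"] by simp
    have e: "x3 + t *\<^sub>R v + s *\<^sub>R (- u) = x3 + y" unfolding y_def by (rule add.assoc)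
    have f2: "2*a + 2*b \<le> r" using far' by simp
    have "r \<le> 2 * norm (x3 + y)" using n1 n2 f2 by linarith
    then show ?thesis unfolding e by simp
  qed
  define g where "g z = \<alpha> * norm z powr (\<alpha> - 2) * (z \<bullet> v)" for z
  define \<psi> where "\<psi> t = norm (x3 + t *\<^sub>R v) powr \<alpha> - norm ((x3 - u) + t *\<^sub>R v) powr \<alpha>" for t
  have N: "(dist 0 x4 powr \<alpha> - dist 0 x3 powr \<alpha>) - (dist x2 x4 powr \<alpha> - dist x2 x3 powr \<alpha>) = \<psi> 1 - \<psi> 0"
  proof -
    have "x3 + v = x4" unfolding v_def by simp
    moreover have "norm (x3 - u + v) = dist x2 x4" unfolding u_def v_def by (simp add: dist_norm norm_minus_commute)
    moreover have "norm (x3 - u) = dist x2 x3" unfolding u_def by (simp add: dist_norm norm_minus_commute)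
    ultimately show ?thesis unfolding \<psi>_def by (simp add: dist_norm)
  qed
  have dpsi: "(\<psi> has_real_derivative (g (x3 + t *\<^sub>R v) - g ((x3 - u) + t *\<^sub>R v))) (at t)"
    if "0 \<le> t" "t \<le> 1" for t
  proof -
    have nz1: "x3 + t *\<^sub>R v \<noteq> 0" using lowz[of 0 t] that far' by auto
    have nz2: "(x3 - u) + t *\<^sub>R v \<noteq> 0" using lowz[of 1 t] that far' by (auto simp: algebra_simps)
    show ?thesis unfolding \<psi>_def[abs_def] g_def
      by (intro DERIV_diff deriv_normpowr nz1 nz2)
  qed
  obtain \<tau> where tau: "0 < \<tau>" "\<tau> < 1" and mvt1: "\<psi> 1 - \<psi> 0 = (1 - 0) * (g (x3 + \<tau> *\<^sub>R v) - g ((x3 - u) + \<tau> *\<^sub>R v))"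
    using MVT2[of 0 1 \<psi> "\<lambda>t. g (x3 + t *\<^sub>R v) - g ((x3 - u) + t *\<^sub>R v)"] dpsi by auto
  define w where "w = x3 + \<tau> *\<^sub>R v"
  define ch where "ch s = \<alpha> * (norm (w + s *\<^sub>R (- u)) powr (\<alpha> - 2) * ((w + s *\<^sub>R (- u)) \<bullet> v))" for s
  define chd where "chd s = \<alpha> * ((\<alpha> - 2) * norm (w + s *\<^sub>R (- u)) powr (\<alpha> - 2 - 2) * ((w + s *\<^sub>R (- u)) \<bullet> (- u)) * ((w + s *\<^sub>R (- u)) \<bullet> v)
        + norm (w + s *\<^sub>R (- u)) powr (\<alpha> - 2) * ((- u) \<bullet> v))" for s
  have c0: "ch 0 = g (x3 + \<tau> *\<^sub>R v)" unfolding ch_def g_def w_def by simp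
  have c1: "ch 1 = g ((x3 - u) + \<tau> *\<^sub>R v)" unfolding ch_def g_def w_def by (simp add: algebra_simps)
  have dchi: "(ch has_real_derivative chd s) (at s)" if "0 \<le> s" "s \<le> 1" for s
  proof -
    have nz: "w + s *\<^sub>R (- u) \<noteq> 0" using lowz[of s \<tau>] that tau far' unfolding w_def by auto
    have d1: "((\<lambda>s. norm (w + s *\<^sub>R (- u)) powr (\<alpha> - 2)) has_real_derivative
        ((\<alpha> - 2) * norm (w + s *\<^sub>R (- u)) powr (\<alpha> - 2 - 2) * ((w + s *\<^sub>R (- u)) \<bullet> (- u)))) (at s)"
      by (rule deriv_normpowr[OF nz])
    have d2: "((\<lambda>s. (w + s *\<^sub>R (- u)) \<bullet> v) has_real_derivative ((- u) \<bullet> v)) (at s)"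
    proof -
      have e: "(\<lambda>s. (w + s *\<^sub>R (- u)) \<bullet> v) = (\<lambda>s. w \<bullet> v + s * ((- u) \<bullet> v))"
        by (simp add: inner_add_left inner_diff_left)
      show ?thesis unfolding e by (auto intro!: derivative_eq_intros)
    qed
    have "(ch has_real_derivative \<alpha> * ((\<alpha> - 2) * norm (w + s *\<^sub>R (- u)) powr (\<alpha> - 2 - 2) * ((w + s *\<^sub>R (- u)) \<bullet> (- u)) * ((w + s *\<^sub>R (- u)) \<bullet> v)
        + ((- u) \<bullet> v) * norm (w + s *\<^sub>R (- u)) powr (\<alpha> - 2))) (at s)"
      unfolding ch_def[abs_def] by (intro DERIV_cmult DERIV_mult d1 d2)
    then show ?thesis unfolding chd_def by (rule DERIV_cong) (simp add: algebra_simps)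
  qed
  obtain \<sigma> where sig: "0 < \<sigma>" "\<sigma> < 1" and mvt2: "ch 1 - ch 0 = (1 - 0) * chd \<sigma>"
    using MVT2[of 0 1 ch chd] dchi by auto
  have Neq: "\<psi> 1 - \<psi> 0 = - chd \<sigma>" using mvt1 mvt2 c0 c1 by simp
  define z where "z = w + \<sigma> *\<^sub>R (- u)"
  define Z where "Z = norm z"
  have Zr: "Z \<ge> r / 2" unfolding Z_def z_def w_def using lowz[of \<sigma> \<tau>] sig tau by simp
  have Zpos: "Z > 0" using Zr far' by simp
  have i1: "\<bar>z \<bullet> (- u)\<bar> \<le> Z * a" unfolding Z_def a_def using Cauchy_Schwarz_ineq2[of z "- u"] by simp
  have i2: "\<bar>z \<bullet> v\<bar> \<le> Z * b" unfolding Z_def b_def using Cauchy_Schwarz_ineq2[of z v] by simp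
  have i3: "\<bar>(- u) \<bullet> v\<bar> \<le> a * b" unfolding a_def b_def using Cauchy_Schwarz_ineq2[of "- u" v] by simp
  have pz: "Z powr (\<alpha> - 2 - 2) * (Z * Z) = Z powr (\<alpha> - 2)"
  proof -
    have "Z powr (\<alpha> - 2 - 2) * (Z * Z) = Z powr (\<alpha> - 2 - 2) * Z powr 2"
      using Zpos by (simp add: powr_numeral power2_eq_square)
    also have "\<dots> = Z powr (\<alpha> - 2)" by (simp add: powr_add[symmetric])
    finally show ?thesis .
  qed
  have t1: "\<bar>(\<alpha> - 2) * Z powr (\<alpha> - 2 - 2) * (z \<bullet> (- u)) * (z \<bullet> v)\<bar> \<le> 2 * (Z powr (\<alpha> - 2) * a * b)"
  proof -
    have "\<bar>(\<alpha> - 2) * Z powr (\<alpha> - 2 - 2) * (z \<bullet> (- u)) * (z \<bullet> v)\<bar>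
        = \<bar>\<alpha> - 2\<bar> * Z powr (\<alpha> - 2 - 2) * (\<bar>z \<bullet> (- u)\<bar> * \<bar>z \<bullet> v\<bar>)"
      by (simp add: abs_mult)
    also have "\<dots> \<le> 2 * Z powr (\<alpha> - 2 - 2) * ((Z * a) * (Z * b))"
      using a0 a1 i1 i2 by (intro mult_mono mult_right_mono) auto
    also have "\<dots> = 2 * (Z powr (\<alpha> - 2 - 2) * (Z * Z)) * a * b" by (simp add: algebra_simps)
    also have "\<dots> = 2 * (Z powr (\<alpha> - 2) * a * b)" unfolding pz by simp
    finally show ?thesis .
  qed
  have t2: "\<bar>Z powr (\<alpha> - 2) * ((- u) \<bullet> v)\<bar> \<le> Z powr (\<alpha> - 2) * a * b"
    using i3 by (simp add: abs_mult mult.assoc mult_left_mono)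
  have chib: "\<bar>chd \<sigma>\<bar> \<le> 3 * (Z powr (\<alpha> - 2) * a * b)"
  proof -
    have "\<bar>chd \<sigma>\<bar> = \<alpha> * \<bar>(\<alpha> - 2) * Z powr (\<alpha> - 2 - 2) * (z \<bullet> (- u)) * (z \<bullet> v) + Z powr (\<alpha> - 2) * ((- u) \<bullet> v)\<bar>"
      unfolding chd_def Z_def z_def using a0 by (simp add: abs_mult)
    also have "\<dots> \<le> 1 * (2 * (Z powr (\<alpha> - 2) * a * b) + Z powr (\<alpha> - 2) * a * b)"
      using a0 a1 t1 t2 ab0 by (intro mult_mono order_trans[OF abs_triangle_ineq] add_mono) auto
    finally show ?thesis by (simp add: algebra_simps)
  qed
  have zr: "Z powr (\<alpha> - 2) \<le> 4 * r powr (\<alpha> - 2)"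
  proof -
    have "Z powr (\<alpha> - 2) \<le> (r/2) powr (\<alpha> - 2)" using a1 Zr far' by (intro powr_mono2') auto
    also have "\<dots> = r powr (\<alpha> - 2) * 2 powr (2 - \<alpha>)"
      using far' by (simp add: powr_divide powr_diff divide_simps)
    also have "\<dots> \<le> r powr (\<alpha> - 2) * 4"
    proof -
      have "2 powr (2 - \<alpha>) \<le> 2 powr (2::real)" using a0 by (intro powr_mono) auto
      then show ?thesis by (intro mult_left_mono) auto
    qed
    finally show ?thesis by simp
  qed
  have "\<bar>\<psi> 1 - \<psi> 0\<bar> \<le> 3 * (Z powr (\<alpha> - 2) * a * b)" using Neq chib by simp
  also have "\<dots> \<le> 3 * (4 * r powr (\<alpha> - 2) * a * b)"
    using zr ab0 by (intro mult_left_mono mult_right_mono) auto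
  finally show ?thesis unfolding N a_def b_def r_def u_def v_def by (simp add: algebra_simps)
qed

definition g2 :: "real \<Rightarrow> real \<Rightarrow> real" where
  "g2 \<alpha> t = (if t \<le> 1 then 1 else t powr (2*\<alpha> - 4))"

lemma rho_bound0:
  fixes x2 x3 x4 :: "real^2"
  assumes a0: "0 < \<alpha>" and a1: "\<alpha> < 1"
  shows "(rho \<alpha> 0 x2 x3 x4)^2 \<le> 36 * (1 + norm x2)^4 * (1 + norm (x4 - x3))^4 * g2 \<alpha> (norm x3)"
proof -
  define a where "a = norm x2"
  define b where "b = norm (x4 - x3)"
  define r where "r = norm x3"
  have ab0: "a \<ge> 0" "b \<ge> 0" "r \<ge> 0" unfolding a_def b_def r_def by auto
  have le1: "(rho \<alpha> 0 x2 x3 x4)^2 \<le> 1" using a0 a1 by (intro rho_sq_le1) auto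
  have A1: "1 \<le> (1 + a)^4" using ab0 by (simp add: one_le_power)
  have B1: "1 \<le> (1 + b)^4" using ab0 by (simp add: one_le_power)
  have P1: "1 \<le> (1 + a)^4 * (1 + b)^4" using mult_mono[OF A1 B1] by simp
  have P1': "1 \<le> (1 + a)^4 * (1 + b)^4" using P1 .
  show ?thesis
  proof (cases "r \<le> 1")
    case True
    then have "g2 \<alpha> (norm x3) = 1" unfolding g2_def r_def by simp
    then show ?thesis using le1 P1 unfolding a_def[symmetric] b_def[symmetric] by simp
  next
    case False
    then have r1: "r > 1" by simp
    have g2r: "g2 \<alpha> (norm x3) = r powr (2*\<alpha> - 4)" using False unfolding g2_def r_def by simp
    show ?thesis
    proof (cases "r < 2 * (a + b)")
      case True
      have "r powr (-4) \<le> r powr (2*\<alpha> - 4)" using r1 a0 by (intro powr_mono) auto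
      moreover have "r powr (-4) = 1 / r^4" using r1 by (simp add: powr_minus powr_realpow divide_inverse)
      ultimately have h1: "1 / r^4 \<le> r powr (2*\<alpha> - 4)" by simp
      have "a + b \<le> (1 + a) * (1 + b)" using ab0 by (simp add: algebra_simps)
      then have "r / 2 \<le> (1 + a) * (1 + b)" using True by simp
      then have "(r/2)^4 \<le> ((1 + a) * (1 + b))^4" using r1 by (intro power_mono) auto
      then have h2: "r^4 / 16 \<le> (1 + a)^4 * (1 + b)^4" by (simp add: power_mult_distrib power_divide)
      have "1 \<le> 36 * (r^4 / 16) * (1 / r^4)" using r1 by simp
      also have "\<dots> \<le> 36 * ((1 + a)^4 * (1 + b)^4) * r powr (2*\<alpha> - 4)"
        using h1 h2 r1 by (intro mult_mono mult_left_mono) auto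
      finally have L: "1 \<le> 36 * (1 + a)^4 * (1 + b)^4 * r powr (2*\<alpha> - 4)" by (simp only: mult.assoc)
      show ?thesis unfolding g2r a_def[symmetric] b_def[symmetric] using order_trans[OF le1 L] .
    next
      case False
      then have far: "2 * (norm x2 + norm (x4 - x3)) \<le> norm x3" unfolding a_def b_def r_def by simp
      show ?thesis
      proof (cases "a = 0 \<or> b = 0")
        case True
        then have "dist 0 x2 * dist x3 x4 = 0" unfolding a_def b_def by (auto simp: dist_norm)
        then have "(dist 0 x2 * dist x3 x4) powr (\<alpha>/2) = 0" by simp
        then have "rho \<alpha> 0 x2 x3 x4 = 0" unfolding rho_def by simp
        then show ?thesis using P1 unfolding g2r by (auto intro!: mult_nonneg_nonneg)
      next
        case False
        then have apos: "a > 0" "b > 0" using ab0 by auto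
        define N where "N = (dist 0 x4 powr \<alpha> - dist 0 x3 powr \<alpha>) - (dist x2 x4 powr \<alpha> - dist x2 x3 powr \<alpha>)"
        have Nb: "\<bar>N\<bar> \<le> 12 * a * b * r powr (\<alpha> - 2)"
        proof -
          have "norm x3 > 0" using r1 unfolding r_def by linarith
          from num_decay[OF a0 a1 far this] show ?thesis unfolding N_def a_def b_def r_def .
        qed
        have "N^2 = \<bar>N\<bar>^2" by simp
        also have "\<dots> \<le> (12 * a * b * r powr (\<alpha> - 2))^2" using Nb by (intro power_mono) auto
        also have "\<dots> = 144 * (a*b)^2 * r powr (2*\<alpha> - 4)"
        proof -
          have "(r powr (\<alpha> - 2))^2 = r powr (2*\<alpha> - 4)"
            using r1 by (simp add: power2_eq_square powr_add[symmetric])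
          then show ?thesis by (simp add: power_mult_distrib)
        qed
        finally have N2: "N^2 \<le> 144 * (a*b)^2 * r powr (2*\<alpha> - 4)" .
        have d: "dist 0 x2 * dist x3 x4 = a * b" unfolding a_def b_def by (simp add: dist_norm norm_minus_commute)
        have sq: "((a * b) powr (\<alpha>/2))^2 = (a*b) powr \<alpha>"
          by (simp only: power2_eq_square powr_add[symmetric]) simp
        have abp: "a * b > 0" using apos by simp
        have "(rho \<alpha> 0 x2 x3 x4)^2 = N^2 / (4 * (a*b) powr \<alpha>)"
          unfolding rho_def N_def[symmetric] d by (simp add: power_divide power_mult_distrib sq)
        also have "\<dots> \<le> 144 * (a*b)^2 * r powr (2*\<alpha> - 4) / (4 * (a*b) powr \<alpha>)"
          using N2 abp by (intro divide_right_mono) auto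
        also have "\<dots> = 36 * ((a*b)^2 / (a*b) powr \<alpha>) * r powr (2*\<alpha> - 4)" by simp
        finally have R1: "(rho \<alpha> 0 x2 x3 x4)^2 \<le> 36 * ((a*b)^2 / (a*b) powr \<alpha>) * r powr (2*\<alpha> - 4)" .
        have e2: "(a*b) powr (real 2) = (a*b)^2" using powr_realpow[of "a*b" 2] abp by simp
        have R2: "(a*b)^2 / (a*b) powr \<alpha> = (a*b) powr (2 - \<alpha>)"
          using e2 by (simp add: powr_diff)
        have R3: "(a*b) powr (2 - \<alpha>) \<le> (1 + a)^4 * (1 + b)^4"
        proof -
          have ab1: "a * b \<le> (1 + a) * (1 + b)" using ab0 by (simp add: algebra_simps)
          have P0: "(1 + a) * (1 + b) \<ge> 1" using ab0 mult_mono[of 1 "1+a" 1 "1+b"] by simp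
          have "(a*b) powr (2 - \<alpha>) \<le> ((1 + a) * (1 + b)) powr (2 - \<alpha>)"
            using ab1 abp a1 by (intro powr_mono2) auto
          also have "\<dots> \<le> ((1 + a) * (1 + b)) powr (real 4)"
            using P0 a0 by (intro powr_mono) auto
          also have "\<dots> = ((1 + a) * (1 + b))^4"
            using P0 by (intro powr_realpow) simp
          also have "\<dots> = (1 + a)^4 * (1 + b)^4" by (simp only: power_mult_distrib)
          finally show ?thesis .
        qed
        have rp: "r powr (2*\<alpha> - 4) \<ge> 0" by simp
        have "36 * ((a*b)^2 / (a*b) powr \<alpha>) * r powr (2*\<alpha> - 4) \<le> 36 * ((1 + a)^4 * (1 + b)^4) * r powr (2*\<alpha> - 4)"
          unfolding R2 using R3 rp by (intro mult_right_mono mult_left_mono) auto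
        with R1 have "(rho \<alpha> 0 x2 x3 x4)^2 \<le> 36 * (1 + a)^4 * (1 + b)^4 * r powr (2*\<alpha> - 4)"
          by (simp only: mult.assoc)
        then show ?thesis unfolding g2r a_def[symmetric] b_def[symmetric] .
      qed
    qed
  qed
qed

definition g1 :: "real \<Rightarrow> real" where "g1 t = 1 / (1 + t)^4"

lemma g1_nn: "0 \<le> t \<Longrightarrow> 0 \<le> g1 t" unfolding g1_def by simp

lemma g1_anti: "0 \<le> s \<Longrightarrow> s \<le> t \<Longrightarrow> g1 t \<le> g1 s"
  unfolding g1_def by (intro divide_left_mono power_mono) auto

lemma g1_summ: "summable (\<lambda>n. g1 (real n) * (2 * real n + 1))"
proof (rule summable_comparison_test')
  show "summable (\<lambda>n. 2 * real n powr (-3))"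
    by (intro summable_mult) (simp add: summable_real_powr_iff)
  fix n :: nat assume n: "n \<ge> 1"
  define m where "m = 1 + real n"
  have m0: "m > 0" unfolding m_def by simp
  have "g1 (real n) * (2 * real n + 1) = (2 * real n + 1) / m^4" unfolding g1_def m_def by simp
  also have "\<dots> \<le> (2 * m) / m^4" using m0 by (intro divide_right_mono) (auto simp: m_def)
  also have "\<dots> = 2 / m^3" using m0 by (simp add: field_simps eval_nat_numeral)
  finally have "g1 (real n) * (2 * real n + 1) \<le> 2 / (1 + real n)^3" unfolding m_def .
  also have "\<dots> \<le> 2 / real n ^ 3" using n by (intro divide_left_mono power_mono mult_pos_pos) auto
  also have "\<dots> = 2 * real n powr (-3)" using n by (simp add: powr_minus powr_realpow divide_inverse)
  finally show "norm (g1 (real n) * (2 * real n + 1)) \<le> 2 * real n powr (-3)"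
    using g1_nn[of "real n"] by simp
qed

lemma g2_nn: "0 \<le> g2 \<alpha> t" unfolding g2_def by simp

lemma g2_anti:
  assumes "\<alpha> < 1" "0 \<le> s" "s \<le> t"
  shows "g2 \<alpha> t \<le> g2 \<alpha> s"
proof (cases "t \<le> 1")
  case True then show ?thesis using assms unfolding g2_def by simp
next
  case False
  then have t1: "t > 1" by simp
  have le1: "t powr (2*\<alpha> - 4) \<le> 1" using t1 assms by (intro less_imp_le powr_less_one) auto
  show ?thesis
  proof (cases "s \<le> 1")
    case True then show ?thesis using le1 False unfolding g2_def by simp
  next
    case False2: False
    then show ?thesis using False assms unfolding g2_def by (auto intro!: powr_mono2')
  qed
qed

lemma g2_summ:
  assumes "\<alpha> < 1"
  shows "summable (\<lambda>n. g2 \<alpha> (real n) * (2 * real n + 1))"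
proof (rule summable_comparison_test'[where N = 2])
  show "summable (\<lambda>n. 3 * real n powr (2*\<alpha> - 3))"
    using assms by (intro summable_mult) (simp add: summable_real_powr_iff)
  fix n :: nat assume n: "n \<ge> 2"
  then have n1: "real n > 1" by simp
  have "g2 \<alpha> (real n) * (2 * real n + 1) = real n powr (2*\<alpha> - 4) * (2 * real n + 1)"
    using n1 unfolding g2_def by simp
  also have "\<dots> \<le> real n powr (2*\<alpha> - 4) * (3 * real n)" using n1 by (intro mult_left_mono) auto
  also have "\<dots> = 3 * real n powr (2*\<alpha> - 3)"
  proof -
    have "real n powr (2*\<alpha> - 3) = real n powr ((2*\<alpha> - 4) + 1)" by simp
    also have "\<dots> = real n powr (2*\<alpha> - 4) * real n powr 1" by (rule powr_add)
    also have "\<dots> = real n powr (2*\<alpha> - 4) * real n" using n1 by simp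
    finally show ?thesis by simp
  qed
  finally show "norm (g2 \<alpha> (real n) * (2 * real n + 1)) \<le> 3 * real n powr (2*\<alpha> - 3)"
    using g2_nn[of \<alpha> "real n"] by simp
qed

lemma g1_meas: "(\<lambda>x::real^2. ennreal (g1 (norm (x - c)))) \<in> borel_measurable lborel"
  unfolding g1_def by measurable

lemma g2_meas: "(\<lambda>x::real^2. ennreal (g2 \<alpha> (norm (x - c)))) \<in> borel_measurable lborel"
  unfolding g2_def by measurable

definition Kprop :: "real \<Rightarrow> bool" where
  "Kprop K \<longleftrightarrow> K > 0 \<and> (\<forall>t\<ge>0. 2 * exp (- (unit_ball_vol 2 / 16) * t^2) \<le> K / (1 + t)^16)"

lemma Kprop_ex: "\<exists>K. Kprop K"
  unfolding Kprop_def using exp_poly_bound[of "unit_ball_vol 2 / 16"] by simp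

lemma edge_poly:
  assumes pp: "poisson_pp M Phi" and K: "Kprop K"
    and sub: "A \<subseteq> {w\<in>space M. del_edge (Phi w \<union> S) x y}"
  shows "measure M A \<le> K / (1 + norm (y - x))^16"
proof -
  have "measure M A \<le> 2 * exp (- unit_ball_vol 2 * (norm (y - x)/4)^2)" by (rule edge_prob[OF pp sub])
  also have "- unit_ball_vol 2 * (norm (y - x)/4)^2 = - (unit_ball_vol 2 / 16) * (norm (y - x))^2"
    by (simp add: power_divide)
  also have "2 * exp (- (unit_ball_vol 2 / 16) * (norm (y - x))^2) \<le> K / (1 + norm (y - x))^16"
    using K unfolding Kprop_def by simp
  finally show ?thesis .
qed

lemma pair_bound:
  fixes p a b K :: real
  assumes "K > 0" "a \<ge> 0" "b \<ge> 0" "p \<le> K / (1 + a)^16" "p \<le> K / (1 + b)^16"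
  shows "p \<le> K / ((1 + a)^8 * (1 + b)^8)"
proof (cases "b \<le> a")
  case True
  have "(1 + a)^8 * (1 + b)^8 \<le> (1 + a)^8 * (1 + a)^8"
    using assms True by (intro mult_left_mono power_mono) auto
  also have "\<dots> = (1 + a)^16" by (simp flip: power_add)
  finally have "K / (1 + a)^16 \<le> K / ((1 + a)^8 * (1 + b)^8)"
    using assms by (intro divide_left_mono) auto
  then show ?thesis using assms by linarith
next
  case False
  have "(1 + a)^8 * (1 + b)^8 \<le> (1 + b)^8 * (1 + b)^8"
    using assms False by (intro mult_right_mono power_mono) auto
  also have "\<dots> = (1 + b)^16" by (simp flip: power_add)
  finally have "K / (1 + b)^16 \<le> K / ((1 + a)^8 * (1 + b)^8)"
    using assms by (intro divide_left_mono) auto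
  then show ?thesis using assms by linarith
qed

lemma g1_prod: "g1 a * g1 b = 1 / ((1 + a)^4 * (1 + b)^4)" unfolding g1_def by simp

lemma F1:
  fixes q a b K :: real
  assumes "0 < \<alpha>" "\<alpha> < 1" "K > 0" "a \<ge> 0" "b \<ge> 0" "q \<ge> 0"
    "q \<le> K / (1 + a)^16" "q \<le> K / (1 + b)^16"
  shows "(rho \<alpha> x1 x2 x3 x4)^2 * q \<le> K * g1 a * g1 b"
proof -
  have q: "q \<le> K / ((1 + a)^8 * (1 + b)^8)" using pair_bound assms by blast
  have "(1 + a)^4 * (1 + b)^4 \<le> (1 + a)^8 * (1 + b)^8"
    using assms by (intro mult_mono power_increasing) auto
  then have "K / ((1 + a)^8 * (1 + b)^8) \<le> K / ((1 + a)^4 * (1 + b)^4)"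
    using assms by (intro divide_left_mono) auto
  also have "\<dots> = K * g1 a * g1 b" using g1_prod[of a b] by (simp add: mult.assoc)
  finally have q2: "q \<le> K * g1 a * g1 b" using q by linarith
  have "(rho \<alpha> x1 x2 x3 x4)^2 * q \<le> 1 * q"
    using rho_sq_le1[of \<alpha>] assms by (intro mult_right_mono) auto
  then show ?thesis using q2 by linarith
qed

lemma F0:
  fixes x2 x3 x4 :: "real^2"
  assumes a: "0 < \<alpha>" "\<alpha> < 1" and pp: "poisson_pp M Phi" and K: "Kprop K"
  shows "(rho \<alpha> 0 x2 x3 x4)^2 * p21 M Phi 0 x2 x3 x4
     \<le> 36 * K * g1 (norm x2) * g2 \<alpha> (norm x3) * g1 (norm (x4 - x3))"
proof -
  define a where "a = norm x2"
  define b where "b = norm (x4 - x3)"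
  define p where "p = p21 M Phi 0 x2 x3 x4"
  have K0: "K > 0" using K unfolding Kprop_def by simp
  have p0: "p \<ge> 0" unfolding p_def p21_def by simp
  have pa': "p \<le> K / (1 + norm (x2 - 0))^16"
    unfolding p_def p21_def by (rule edge_poly[OF pp K, where S = "{0, x2, x3, x4}"]) auto
  have pa: "p \<le> K / (1 + a)^16" using pa' unfolding a_def by simp
  have pb: "p \<le> K / (1 + b)^16"
    unfolding p_def p21_def b_def by (rule edge_poly[OF pp K, where S = "{0, x2, x3, x4}"]) auto
  have q: "p \<le> K / ((1 + a)^8 * (1 + b)^8)"
    using pair_bound[OF K0 _ _ pa pb] unfolding a_def b_def by simp
  have r: "(rho \<alpha> 0 x2 x3 x4)^2 \<le> 36 * (1 + a)^4 * (1 + b)^4 * g2 \<alpha> (norm x3)"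
    unfolding a_def b_def using rho_bound0[OF a] .
  have "(rho \<alpha> 0 x2 x3 x4)^2 * p \<le> (36 * (1 + a)^4 * (1 + b)^4 * g2 \<alpha> (norm x3)) * (K / ((1 + a)^8 * (1 + b)^8))"
    using r q p0 g2_nn[of \<alpha> "norm x3"] unfolding a_def b_def by (intro mult_mono) auto
  also have "\<dots> = 36 * K * g2 \<alpha> (norm x3) * ((1 + a)^4 * (1 + b)^4 / ((1 + a)^8 * (1 + b)^8))"
    by (simp add: field_simps)
  also have "(1 + a)^4 * (1 + b)^4 / ((1 + a)^8 * (1 + b)^8) = 1 / ((1 + a)^4 * (1 + b)^4)"
  proof -
    have "1 + a > 0" unfolding a_def using norm_ge_zero[of x2] by linarith
    moreover have "1 + b > 0" unfolding b_def using norm_ge_zero[of "x4 - x3"] by linarith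
    ultimately have pos: "(1 + a)^4 > 0" "(1 + b)^4 > 0" by simp_all
    have "(1 + a)^8 * (1 + b)^8 = ((1 + a)^4 * (1 + b)^4) * ((1 + a)^4 * (1 + b)^4)"
      by (simp flip: power_add add: algebra_simps)
    then show ?thesis using pos by simp
  qed
  also have "\<dots> = g1 a * g1 b" by (simp add: g1_prod)
  finally show ?thesis unfolding p_def a_def b_def by (simp add: algebra_simps)
qed

definition I1 :: ennreal where "I1 = ennreal (unit_ball_vol 2 * (\<Sum>n. g1 (real n) * (2 * real n + 1)))"
definition I2 :: "real \<Rightarrow> ennreal" where "I2 \<alpha> = ennreal (unit_ball_vol 2 * (\<Sum>n. g2 \<alpha> (real n) * (2 * real n + 1)))"

lemma R1: "(\<integral>\<^sup>+x. ennreal (g1 (norm (x - (c::real^2)))) \<partial>lborel) \<le> I1"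
  unfolding I1_def by (rule radial_bound) (auto intro: g1_nn g1_anti g1_summ)

lemma R2: "\<alpha> < 1 \<Longrightarrow> (\<integral>\<^sup>+x. ennreal (g2 \<alpha> (norm (x - (c::real^2)))) \<partial>lborel) \<le> I2 \<alpha>"
  unfolding I2_def by (rule radial_bound) (auto intro: g2_nn g2_anti g2_summ)

lemma I1_fin: "I1 < \<infinity>" unfolding I1_def by simp
lemma I2_fin: "I2 \<alpha> < \<infinity>" unfolding I2_def by simp

lemma cmult_le:
  assumes "f \<in> borel_measurable M" "integral\<^sup>N M f \<le> I"
  shows "(\<integral>\<^sup>+x. c * f x \<partial>M) \<le> c * I"
  using assms by (simp add: nn_integral_cmult mult_left_mono)

lemma int2:
  fixes f :: "real^2 \<Rightarrow> real^2 \<Rightarrow> ennreal" and c :: "real^2 \<Rightarrow> real^2"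
  assumes C: "C \<ge> 0" and b: "\<And>x y. f x y \<le> ennreal (C * g1 (norm x) * g1 (norm (y - c x)))"
  shows "(\<integral>\<^sup>+x. \<integral>\<^sup>+y. f x y \<partial>lborel \<partial>lborel) < \<infinity>"
proof -
  have "(\<integral>\<^sup>+x. \<integral>\<^sup>+y. f x y \<partial>lborel \<partial>lborel)
      \<le> (\<integral>\<^sup>+x. \<integral>\<^sup>+y. ennreal (C * g1 (norm x)) * ennreal (g1 (norm (y - c x))) \<partial>lborel \<partial>lborel)"
  proof (intro nn_integral_mono)
    fix x y :: "real^2"
    have e: "ennreal (C * g1 (norm x) * g1 (norm (y - c x))) = ennreal (C * g1 (norm x)) * ennreal (g1 (norm (y - c x)))"
      using C g1_nn by (intro ennreal_mult) auto
    show "f x y \<le> ennreal (C * g1 (norm x)) * ennreal (g1 (norm (y - c x)))" by (subst e[symmetric]) (rule b)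
  qed
  also have "\<dots> \<le> (\<integral>\<^sup>+x. ennreal (C * g1 (norm (x::real^2))) * I1 \<partial>lborel)"
    by (intro nn_integral_mono cmult_le g1_meas R1)
  also have "\<dots> = (\<integral>\<^sup>+x. (ennreal C * I1) * ennreal (g1 (norm ((x::real^2) - 0))) \<partial>lborel)"
    using C g1_nn by (intro nn_integral_cong) (simp add: ennreal_mult mult_ac)
  also have "\<dots> \<le> (ennreal C * I1) * I1"
    by (intro cmult_le g1_meas R1)
  also have "\<dots> < \<infinity>" using I1_fin by (simp add: ennreal_mult_less_top)
  finally show ?thesis .
qed

lemma int3:
  fixes f :: "real^2 \<Rightarrow> real^2 \<Rightarrow> real^2 \<Rightarrow> ennreal"
  assumes a1: "\<alpha> < 1" and C: "C \<ge> 0"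
    and b: "\<And>x y z. f x y z \<le> ennreal (C * g1 (norm x) * g2 \<alpha> (norm y) * g1 (norm (z - y)))"
  shows "(\<integral>\<^sup>+x. \<integral>\<^sup>+y. \<integral>\<^sup>+z. (f x y z) \<partial>lborel \<partial>lborel \<partial>lborel) < \<infinity>"
proof -
  have pw: "f x y z \<le> ennreal (C * g1 (norm x) * g2 \<alpha> (norm y)) * ennreal (g1 (norm (z - y)))" for x y z
  proof -
    have e: "ennreal (C * g1 (norm x) * g2 \<alpha> (norm y) * g1 (norm (z - y))) = ennreal (C * g1 (norm x) * g2 \<alpha> (norm y)) * ennreal (g1 (norm (z - y)))"
      using C g1_nn g2_nn by (intro ennreal_mult) auto
    show ?thesis by (subst e[symmetric]) (rule b)
  qed
  have "(\<integral>\<^sup>+x. \<integral>\<^sup>+y. \<integral>\<^sup>+z. (f x y z) \<partial>lborel \<partial>lborel \<partial>lborel)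
      \<le> (\<integral>\<^sup>+x. \<integral>\<^sup>+y. \<integral>\<^sup>+z. ennreal (C * g1 (norm (x::real^2)) * g2 \<alpha> (norm (y::real^2))) * ennreal (g1 (norm (z - y))) \<partial>lborel \<partial>lborel \<partial>lborel)"
    by (intro nn_integral_mono pw)
  also have "\<dots> \<le> (\<integral>\<^sup>+x. \<integral>\<^sup>+y. ennreal (C * g1 (norm (x::real^2)) * g2 \<alpha> (norm (y::real^2))) * I1 \<partial>lborel \<partial>lborel)"
    by (intro nn_integral_mono cmult_le g1_meas R1)
  also have "\<dots> = (\<integral>\<^sup>+x. \<integral>\<^sup>+y. (ennreal (C * g1 (norm (x::real^2))) * I1) * ennreal (g2 \<alpha> (norm ((y::real^2) - 0))) \<partial>lborel \<partial>lborel)"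
    using C g1_nn g2_nn by (intro nn_integral_cong) (simp add: ennreal_mult mult_ac)
  also have "\<dots> \<le> (\<integral>\<^sup>+x. (ennreal (C * g1 (norm (x::real^2))) * I1) * I2 \<alpha> \<partial>lborel)"
    by (intro nn_integral_mono cmult_le g2_meas R2 a1)
  also have "\<dots> = (\<integral>\<^sup>+x. (ennreal C * I1 * I2 \<alpha>) * ennreal (g1 (norm ((x::real^2) - 0))) \<partial>lborel)"
    using C g1_nn by (intro nn_integral_cong) (simp add: ennreal_mult mult_ac)
  also have "\<dots> \<le> (ennreal C * I1 * I2 \<alpha>) * I1"
    by (intro cmult_le g1_meas R1)
  also have "\<dots> < \<infinity>" using I1_fin I2_fin by (simp add: ennreal_mult_less_top)
  finally show ?thesis .
qed

theorem lemma1: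
  fixes \<alpha> :: real and M :: "'w measure" and Phi :: "'w \<Rightarrow> (real^2) set"
  assumes "0 < \<alpha>" and "\<alpha> < 1"
    and "poisson_pp M Phi"
  shows "sigmaV2 \<alpha> M Phi < \<infinity>"
proof -
  note a0 = assms(1) and a1 = assms(2) and pp = assms(3)
  obtain K where K: "Kprop K" using Kprop_ex by blast
  have K0: "K > 0" using K unfolding Kprop_def by simp
  have s0: "sigma0 \<alpha> M Phi < \<infinity>"
    unfolding sigma0_def
  proof (rule int3[OF a1, where C = "36 * K"])
    show "0 \<le> 36 * K" using K0 by simp
    fix x2 x3 x4 :: "real^2"
    show "(if distinct [0, x2, x3, x4] then ennreal ((rho \<alpha> 0 x2 x3 x4)\<^sup>2 * p21 M Phi 0 x2 x3 x4) else 0)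
       \<le> ennreal (36 * K * g1 (norm x2) * g2 \<alpha> (norm x3) * g1 (norm (x4 - x3)))"
      using F0[OF a0 a1 pp K, of x2 x3 x4] by (auto intro: ennreal_leI)
  qed
  have s31: "sigma1_31 \<alpha> M Phi < \<infinity>"
    unfolding sigma1_31_def
  proof (rule int2[where C = K and c = "\<lambda>_. 0"])
    show "0 \<le> K" using K0 by simp
    fix x2 x4 :: "real^2"
    have qa: "q31 M Phi 0 x2 x4 \<le> K / (1 + norm (x2 - 0))^16"
      unfolding q31_def by (rule edge_poly[OF pp K, where S = "{0, x2, x4}"]) auto
    have qb: "q31 M Phi 0 x2 x4 \<le> K / (1 + norm (x4 - 0))^16"
      unfolding q31_def by (rule edge_poly[OF pp K, where S = "{0, x2, x4}"]) auto
    have "(rho \<alpha> 0 x2 0 x4)\<^sup>2 * q31 M Phi 0 x2 x4 \<le> K * g1 (norm x2) * g1 (norm (x4 - 0))"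
      using qa qb a0 a1 K0 by (intro F1) (auto simp: q31_def)
    then show "(if distinct [0, x2, x4] then ennreal ((rho \<alpha> 0 x2 0 x4)\<^sup>2 * q31 M Phi 0 x2 x4) else 0)
       \<le> ennreal (K * g1 (norm x2) * g1 (norm (x4 - 0)))"
      by (auto intro: ennreal_leI)
  qed
  have s32: "sigma1_32 \<alpha> M Phi < \<infinity>"
    unfolding sigma1_32_def
  proof (rule int2[where C = K and c = "\<lambda>x. x"])
    show "0 \<le> K" using K0 by simp
    fix x2 x4 :: "real^2"
    have qa: "q32 M Phi 0 x2 x4 \<le> K / (1 + norm (x2 - 0))^16"
      unfolding q32_def by (rule edge_poly[OF pp K, where S = "{0, x2, x4}"]) auto
    have qb: "q32 M Phi 0 x2 x4 \<le> K / (1 + norm (x4 - x2))^16"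
      unfolding q32_def by (rule edge_poly[OF pp K, where S = "{0, x2, x4}"]) auto
    have "(rho \<alpha> 0 x2 x2 x4)\<^sup>2 * q32 M Phi 0 x2 x4 \<le> K * g1 (norm x2) * g1 (norm (x4 - x2))"
      using qa qb a0 a1 K0 by (intro F1) (auto simp: q32_def)
    then show "(if distinct [0, x2, x4] then ennreal ((rho \<alpha> 0 x2 x2 x4)\<^sup>2 * q32 M Phi 0 x2 x4) else 0)
       \<le> ennreal (K * g1 (norm x2) * g1 (norm (x4 - x2)))"
      by (auto intro: ennreal_leI)
  qed
  have s41: "sigma1_41 \<alpha> M Phi < \<infinity>"
    unfolding sigma1_41_def
  proof (rule int2[where C = K and c = "\<lambda>_. 0"])
    show "0 \<le> K" using K0 by simp
    fix x2 x3 :: "real^2"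
    have qa: "q41 M Phi 0 x2 x3 \<le> K / (1 + norm (x2 - 0))^16"
      unfolding q41_def by (rule edge_poly[OF pp K, where S = "{0, x2, x3}"]) auto
    have qb: "q41 M Phi 0 x2 x3 \<le> K / (1 + norm (x3 - 0))^16"
      unfolding q41_def by (rule edge_poly[OF pp K, where S = "{0, x2, x3}"]) auto
    have "(rho \<alpha> 0 x2 x3 0)\<^sup>2 * q41 M Phi 0 x2 x3 \<le> K * g1 (norm x2) * g1 (norm (x3 - 0))"
      using qa qb a0 a1 K0 by (intro F1) (auto simp: q41_def)
    then show "(if distinct [0, x2, x3] then ennreal ((rho \<alpha> 0 x2 x3 0)\<^sup>2 * q41 M Phi 0 x2 x3) else 0)
       \<le> ennreal (K * g1 (norm x2) * g1 (norm (x3 - 0)))"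
      by (auto intro: ennreal_leI)
  qed
  have s42: "sigma1_42 \<alpha> M Phi < \<infinity>"
    unfolding sigma1_42_def
  proof (rule int2[where C = K and c = "\<lambda>x. x"])
    show "0 \<le> K" using K0 by simp
    fix x2 x3 :: "real^2"
    have qa: "q42 M Phi 0 x2 x3 \<le> K / (1 + norm (x2 - 0))^16"
      unfolding q42_def by (rule edge_poly[OF pp K, where S = "{0, x2, x3}"]) auto
    have qb: "q42 M Phi 0 x2 x3 \<le> K / (1 + norm (x3 - x2))^16"
      unfolding q42_def by (rule edge_poly[OF pp K, where S = "{0, x2, x3}"]) auto
    have "(rho \<alpha> 0 x2 x3 x2)\<^sup>2 * q42 M Phi 0 x2 x3 \<le> K * g1 (norm x2) * g1 (norm (x3 - x2))"
      using qa qb a0 a1 K0 by (intro F1) (auto simp: q42_def)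
    then show "(if distinct [0, x2, x3] then ennreal ((rho \<alpha> 0 x2 x3 x2)\<^sup>2 * q42 M Phi 0 x2 x3) else 0)
       \<le> ennreal (K * g1 (norm x2) * g1 (norm (x3 - x2)))"
      by (auto intro: ennreal_leI)
  qed
  have t: "(2::ennreal) / 3 < \<top>"
  proof -
    have "(2::ennreal) / 3 = ennreal (2/3)" using divide_ennreal[of 2 3] by simp
    then show ?thesis by simp
  qed
  show ?thesis unfolding sigmaV2_def using s0 s31 s32 s41 s42 t
    by (simp add: ennreal_mult_less_top)
qed

end
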